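(* Let $X\in L_2^p(P)$ be centered with $\Sigma=\mathrm{Cov}(X)$, let $\varepsilon\in L_2^q(P)$ be centered with $V=\mathrm{Cov}(\varepsilon)$ and stochastically independent of $X$, let $Z\in\mathbb R^{q\times p}$ and $Y=ZX+\varepsilon$. Put $B=Z\Sigma Z^\tau$, $C=B+V$, $K=\Sigma Z^\tau C^-$ and $Z^\Sigma=\Sigma Z^\tau B^-$. Then, regardless of the ranks of $Z$ or $B$, $\mathrm{oP}(\varepsilon\,|\,Y)=(I_q-ZK)Y$ and $$\mathrm{oP}(X\,|\,Y)=Z^\Sigma\big(Y-\mathrm{oP}(\varepsilon\,|\,Y)\big)\quad\text{almost surely},$$ where $\mathrm{oP}(X\,|\,Y)=KY$.
   Context: $M^-$ denotes the Moore–Penrose generalized inverse of a matrix $M$. For random vectors $a,b$ in $L_2$, $\mathrm{oP}(a\,|\,b)$ denotes the best linear reconstruction of $a$ by means of $b$, i.e. the componentwise orthogonal $L_2$-projection of $a$ onto the closed linear span of the components of $b$ (for centered vectors, $\mathrm{oP}(a|b)=\mathrm{Cov}(a,b)\mathrm{Cov}(b)^-b$). $I_q$ is the $q\times q$ identity. *)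

theory Defs
  imports "HOL-Probability.Probability"
begin

text \<open>Moore--Penrose generalized inverse, defined by the four Penrose conditions
  (it exists and is unique for every real matrix).\<close>
definition mp_inverse :: "real^'n^'m \<Rightarrow> real^'m^'n" where
  "mp_inverse A = (THE G. A ** G ** A = A \<and> G ** A ** G = G \<and>
      transpose (A ** G) = A ** G \<and> transpose (G ** A) = G ** A)"

definition L2_vec :: "'a measure \<Rightarrow> ('a \<Rightarrow> real^'n) \<Rightarrow> bool" where
  "L2_vec M X \<longleftrightarrow> X \<in> borel_measurable M \<and>
     (\<forall>i. integrable M (\<lambda>\<omega>. (X \<omega> $ i)\<^sup>2))"

definition centered :: "'a measure \<Rightarrow> ('a \<Rightarrow> real^'n) \<Rightarrow> bool" where
  "centered M X \<longleftrightarrow> (\<forall>i. integral\<^sup>L M (\<lambda>\<omega>. X \<omega> $ i) = 0)"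

text \<open>Covariance matrix of a centered random vector: entries E[X_i X_j].\<close>
definition cov_mat :: "'a measure \<Rightarrow> ('a \<Rightarrow> real^'n) \<Rightarrow> real^'n^'n" where
  "cov_mat M X = (\<chi> i j. integral\<^sup>L M (\<lambda>\<omega>. X \<omega> $ i * X \<omega> $ j))"

text \<open>c is the componentwise orthogonal L2-projection of a onto the (finite-dimensional,
  hence closed) linear span of the components of b: each component of c lies
  (a.e.) in that span, and each component of a - c is L2-orthogonal to every
  component of b.\<close>
definition is_oP :: "'a measure \<Rightarrow> ('a \<Rightarrow> real^'m) \<Rightarrow> ('a \<Rightarrow> real^'n) \<Rightarrow> ('a \<Rightarrow> real^'m) \<Rightarrow> bool" where
  "is_oP M a b c \<longleftrightarrow> c \<in> borel_measurable M \<and>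
     (\<exists>W :: real^'n^'m. AE \<omega> in M. c \<omega> = W *v b \<omega>) \<and>
     (\<forall>i j. integral\<^sup>L M (\<lambda>\<omega>. (a \<omega> $ i - c \<omega> $ i) * b \<omega> $ j) = 0)"

text \<open>The best linear reconstruction oP(a|b) (a representative of the a.e.-unique projection).\<close>
definition oP :: "'a measure \<Rightarrow> ('a \<Rightarrow> real^'m) \<Rightarrow> ('a \<Rightarrow> real^'n) \<Rightarrow> ('a \<Rightarrow> real^'m)" where
  "oP M a b = (SOME c. is_oP M a b c)"

end

theory Submission
  imports Defs
begin


lemma mm_add_r: "((A::real^'n^'m) + B) ** C = A ** C + B ** C"
  by (simp add: matrix_matrix_mult_def vec_eq_iff sum.distrib[symmetric] algebra_simps)
lemma mm_diff_r: "((A::real^'n^'m) - B) ** C = A ** C - B ** C"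
  by (simp add: matrix_matrix_mult_def vec_eq_iff sum_subtractf[symmetric] algebra_simps)
lemma mm_diff_l: "(A::real^'n^'m) ** (B - C) = A ** B - A ** C"
  by (simp add: matrix_matrix_mult_def vec_eq_iff sum_subtractf[symmetric] algebra_simps)
lemma transpose_diff: "transpose ((A::real^'n^'m) - B) = transpose A - transpose B"
  by (simp add: transpose_def vec_eq_iff)
lemma transpose_mat1: "transpose (mat 1 :: real^'n^'n) = mat 1"
  by (simp add: transpose_def mat_def vec_eq_iff)

definition penrose :: "real^'n^'m \<Rightarrow> real^'m^'n \<Rightarrow> bool" where
  "penrose A G \<longleftrightarrow> A ** G ** A = A \<and> G ** A ** G = G \<and>
      transpose (A ** G) = A ** G \<and> transpose (G ** A) = G ** A"

lemma penrose_unique: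
  assumes "penrose A G1" "penrose A G2" shows "G1 = G2"
proof -
  note p1 = assms(1)[unfolded penrose_def] and p2 = assms(2)[unfolded penrose_def]
  have At1: "transpose A = transpose A ** A ** G2"
  proof -
    have "transpose A = transpose (A ** G2 ** A)" using p2 by simp
    also have "\<dots> = transpose A ** transpose (A ** G2)" by (simp add: matrix_transpose_mul)
    also have "\<dots> = transpose A ** A ** G2" using p2 by (simp add: matrix_mul_assoc)
    finally show ?thesis .
  qed
  have At2: "transpose A = G1 ** A ** transpose A"
  proof -
    have "transpose A = transpose (A ** G1 ** A)" using p1 by simp
    also have "\<dots> = transpose (G1 ** A) ** transpose A" by (simp add: matrix_transpose_mul matrix_mul_assoc)
    also have "\<dots> = G1 ** A ** transpose A" using p1 by simp
    finally show ?thesis .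
  qed
  have "G1 = G1 ** (A ** G1)" using p1 by (simp add: matrix_mul_assoc)
  also have "\<dots> = G1 ** transpose (A ** G1)" using p1 by simp
  also have "\<dots> = G1 ** transpose G1 ** transpose A" by (simp add: matrix_transpose_mul matrix_mul_assoc)
  also have "\<dots> = G1 ** transpose G1 ** (transpose A ** A ** G2)" using At1 by simp
  also have "\<dots> = G1 ** transpose (A ** G1) ** A ** G2" by (simp add: matrix_transpose_mul matrix_mul_assoc)
  also have "\<dots> = G1 ** A ** G1 ** A ** G2" using p1 by (simp add: matrix_mul_assoc)
  also have "\<dots> = G1 ** A ** G2" using p1 by simp
  finally have e1: "G1 = G1 ** A ** G2" .
  have "G2 = (G2 ** A) ** G2" using p2 by simp
  also have "\<dots> = transpose (G2 ** A) ** G2" using p2 by simp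
  also have "\<dots> = transpose A ** transpose G2 ** G2" by (simp add: matrix_transpose_mul)
  also have "\<dots> = (G1 ** A ** transpose A) ** transpose G2 ** G2" using At2 by simp
  also have "\<dots> = G1 ** A ** transpose (G2 ** A) ** G2" by (simp add: matrix_transpose_mul matrix_mul_assoc)
  also have "\<dots> = G1 ** A ** (G2 ** A ** G2)" by (simp only: matrix_mul_assoc p2[THEN conjunct2, THEN conjunct2, THEN conjunct2])
  also have "\<dots> = G1 ** A ** G2" using p2 by simp
  finally show ?thesis using e1 by simp
qed



lemma proj_exists:
  fixes A :: "real^'n^'n"
  obtains P :: "real^'n^'n" where "transpose P = P" "P ** P = P" "P ** A = A"
     "\<And>x. P *v x \<in> range ((*v) A)"
proof -
  have sub: "subspace (range ((*v) A))"
    using linear_subspace_image[OF matrix_vector_mul_linear[of A] subspace_UNIV] by simp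
  obtain Bs where Bs: "Bs \<subseteq> range ((*v) A)" "pairwise orthogonal Bs"
      "\<And>x. x \<in> Bs \<Longrightarrow> norm x = 1" "independent Bs" "span Bs = range ((*v) A)"
    using orthonormal_basis_subspace[OF sub] by metis
  have fin: "finite Bs" using Bs(4) independent_imp_finite by blast
  define P :: "real^'n^'n" where "P = (\<chi> i j. \<Sum>b\<in>Bs. b$i * b$j)"
  have Pv: "P *v x = (\<Sum>b\<in>Bs. inner b x *\<^sub>R b)" for x
    by (simp add: P_def vec_eq_iff matrix_vector_mult_def sum_component inner_vec_def
        sum_distrib_right sum_distrib_left mult_ac sum.swap[of _ Bs])
  have Pb: "P *v b = b" if "b \<in> Bs" for b
  proof -
    have "P *v b = inner b b *\<^sub>R b + (\<Sum>c\<in>Bs - {b}. inner c b *\<^sub>R c)"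
      using that fin by (simp add: Pv sum.remove)
    also have "(\<Sum>c\<in>Bs - {b}. inner c b *\<^sub>R c) = 0"
      using Bs(2) that by (intro sum.neutral) (auto simp: pairwise_def orthogonal_def)
    also have "inner b b = 1" using Bs(3)[OF that] by (simp add: norm_eq_1)
    finally show ?thesis by simp
  qed
  have Pid: "P *v x = x" if "x \<in> range ((*v) A)" for x
  proof -
    have "x \<in> span Bs" using that Bs(5) by simp
    moreover have "subspace {x. (P - mat 1) *v x = 0}"
      by (rule linear_subspace_kernel) simp
    ultimately have "(P - mat 1) *v x = 0"
      by (rule span_induct) (use Pb in \<open>auto simp: matrix_vector_mult_diff_rdistrib\<close>)
    then show ?thesis by (simp add: matrix_vector_mult_diff_rdistrib)
  qed
  have Prange: "P *v x \<in> range ((*v) A)" for x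
  proof -
    have "P *v x \<in> span Bs" unfolding Pv
      by (intro span_sum span_scale span_base)
    then show ?thesis using Bs(5) by simp
  qed
  have "transpose P = P" by (simp add: P_def transpose_def vec_eq_iff mult.commute)
  moreover have "P ** P = P"
    by (simp add: matrix_eq matrix_vector_mul_assoc[symmetric] Pid Prange)
  moreover have "P ** A = A"
    by (simp add: matrix_eq matrix_vector_mul_assoc[symmetric] Pid)
  ultimately show ?thesis using that Prange by blast
qed



lemma penrose_exists_sym:
  fixes A :: "real^'n^'n"
  assumes sym: "transpose A = A"
  shows "\<exists>G. penrose A G"
proof -
  obtain P :: "real^'n^'n" where P: "transpose P = P" "P ** P = P" "P ** A = A"
     "\<And>x. P *v x \<in> range ((*v) A)"
    using proj_exists by blast
  have AP: "A ** P = A"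
  proof -
    have "transpose (P ** A) = A ** P" by (simp add: matrix_transpose_mul P(1) sym)
    then show ?thesis using P(3) sym by simp
  qed
  define T where "T = A + mat 1 - P"
  have TP: "T ** P = A" by (simp add: T_def mm_diff_r mm_add_r AP P(2))
  have PT: "P ** T = A" by (simp add: T_def mm_diff_l matrix_add_ldistrib P(2) P(3))
  have inj: "inj ((*v) T)"
  proof -
    have "x = 0" if "T *v x = 0" for x
    proof -
      have e: "A *v x + x - P *v x = 0" using that
        by (simp add: T_def matrix_vector_mult_diff_rdistrib matrix_vector_mult_add_rdistrib)
      have "P *v (A *v x + x - P *v x) = 0" using e by simp
      then have Ax: "A *v x = 0"
        by (simp add: matrix_vector_mult_diff_distrib matrix_vector_right_distrib
            matrix_vector_mul_assoc P(2) P(3))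
      then have xP: "x = P *v x" using e by simp
      then obtain y where y: "x = A *v y" using P(4)[of x] by auto
      have "inner x x = inner (A *v y) x" using y by simp
      also have "\<dots> = inner (x v* A) y" by (metis dot_lmul_matrix inner_commute)
      also have "x v* A = A *v x"
        by (metis sym vector_transpose_matrix)
      finally show "x = 0" using Ax by simp
    qed
    then show ?thesis by (simp add: vec.inj_iff_eq_0)
  qed
  obtain N where NT: "N ** T = mat 1"
    using inj matrix_left_invertible_injective by blast
  then have TN: "T ** N = mat 1" using matrix_left_right_inverse by blast
  have NP: "N ** P = P ** N"
  proof -
    have "N ** P = N ** P ** (T ** N)" by (simp add: TN)
    also have "\<dots> = N ** (P ** T) ** N" by (simp only: matrix_mul_assoc)
    also have "\<dots> = N ** (T ** P) ** N" by (simp add: TP PT)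
    also have "\<dots> = (N ** T) ** P ** N" by (simp only: matrix_mul_assoc)
    finally show ?thesis by (simp add: NT)
  qed
  define G where "G = N ** P"
  have AG: "A ** G = P"
  proof -
    have "A ** G = T ** (P ** N) ** P" by (simp add: G_def TP[symmetric] matrix_mul_assoc)
    also have "\<dots> = T ** (N ** P) ** P" by (simp add: NP)
    also have "\<dots> = (T ** N) ** (P ** P)" by (simp only: matrix_mul_assoc)
    finally show ?thesis by (simp add: TN P(2))
  qed
  have GA: "G ** A = P"
  proof -
    have "G ** A = N ** (P ** P) ** T" by (simp add: G_def PT[symmetric] matrix_mul_assoc)
    also have "\<dots> = N ** P ** T" by (simp add: P(2))
    also have "\<dots> = N ** (P ** T)" by (simp only: matrix_mul_assoc)
    also have "\<dots> = N ** (T ** P)" by (simp add: TP PT)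
    also have "\<dots> = (N ** T) ** P" by (simp only: matrix_mul_assoc)
    finally show ?thesis by (simp add: NT)
  qed
  have "A ** G ** A = A" by (simp add: AG P(3))
  moreover have "G ** A ** G = G"
  proof -
    have "G ** A ** G = P ** G" by (simp add: GA)
    also have "\<dots> = P ** (P ** N)" by (simp add: G_def NP)
    also have "\<dots> = (P ** P) ** N" by (simp only: matrix_mul_assoc)
    finally show ?thesis by (simp add: P(2) G_def NP)
  qed
  ultimately have "penrose A G" unfolding penrose_def using AG GA P(1) by simp
  then show ?thesis by blast
qed

lemma mp_inverse_sym:
  fixes A :: "real^'n^'n"
  assumes "transpose A = A"
  shows "penrose A (THE G. A ** G ** A = A \<and> G ** A ** G = G \<and>
      transpose (A ** G) = A ** G \<and> transpose (G ** A) = G ** A)"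
proof -
  obtain G where G: "penrose A G" using penrose_exists_sym[OF assms] by blast
  have "(THE G. A ** G ** A = A \<and> G ** A ** G = G \<and>
      transpose (A ** G) = A ** G \<and> transpose (G ** A) = G ** A) = G"
    apply (rule the_equality)
    using G penrose_unique[OF _ G] unfolding penrose_def by blast+
  then show ?thesis using G by simp
qed


lemma abs_prod_le: "\<bar>(a::real) * b\<bar> \<le> a\<^sup>2 + b\<^sup>2"
proof -
  have "0 \<le> (\<bar>a\<bar> - \<bar>b\<bar>)\<^sup>2" by simp
  then have "2 * (\<bar>a\<bar> * \<bar>b\<bar>) \<le> a\<^sup>2 + b\<^sup>2" by (simp add: power2_diff)
  moreover have "0 \<le> \<bar>a\<bar> * \<bar>b\<bar>" by simp
  ultimately have "\<bar>a\<bar> * \<bar>b\<bar> \<le> a\<^sup>2 + b\<^sup>2" by linarith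
  then show ?thesis by (simp add: abs_mult)
qed

lemma int_prod:
  fixes f g :: "'a \<Rightarrow> real"
  assumes "f \<in> borel_measurable M" "g \<in> borel_measurable M"
    "integrable M (\<lambda>x. (f x)\<^sup>2)" "integrable M (\<lambda>x. (g x)\<^sup>2)"
  shows "integrable M (\<lambda>x. f x * g x)"
proof (rule Bochner_Integration.integrable_bound[where f="\<lambda>x. (f x)\<^sup>2 + (g x)\<^sup>2"])
  show "integrable M (\<lambda>x. (f x)\<^sup>2 + (g x)\<^sup>2)" using assms by (rule_tac Bochner_Integration.integrable_add)
  show "(\<lambda>x. f x * g x) \<in> borel_measurable M" using assms by (intro borel_measurable_times)
  show "AE x in M. norm (f x * g x) \<le> norm ((f x)\<^sup>2 + (g x)\<^sup>2)"
  proof (intro AE_I2)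
    fix x
    have nn: "0 \<le> (f x)\<^sup>2 + (g x)\<^sup>2" by (intro add_nonneg_nonneg zero_le_power2)
    have "norm (f x * g x) \<le> (f x)\<^sup>2 + (g x)\<^sup>2"
      using abs_prod_le[of "f x" "g x"] by (simp only: real_norm_def)
    also have "\<dots> = norm ((f x)\<^sup>2 + (g x)\<^sup>2)" using nn by (simp only: real_norm_def abs_of_nonneg)
    finally show "norm (f x * g x) \<le> norm ((f x)\<^sup>2 + (g x)\<^sup>2)" .
  qed
qed

lemma L2_meas: "L2_vec M X \<Longrightarrow> (\<lambda>w. X w $ i) \<in> borel_measurable M"
  unfolding L2_vec_def
  by (rule measurable_compose[of X M borel]) auto

lemma L2_sq: "L2_vec M X \<Longrightarrow> integrable M (\<lambda>w. (X w $ i)\<^sup>2)"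
  unfolding L2_vec_def by auto

lemma L2_int_prod: "L2_vec M X \<Longrightarrow> L2_vec M Y \<Longrightarrow> integrable M (\<lambda>w. X w $ i * Y w $ j)"
  by (intro int_prod L2_meas L2_sq)

lemma L2_int: "prob_space M \<Longrightarrow> L2_vec M X \<Longrightarrow> integrable M (\<lambda>w. X w $ i)"
proof -
  assume pM: "prob_space M" and X: "L2_vec M X"
  interpret prob_space M by fact
  have "integrable M (\<lambda>w. X w $ i * 1)"
    by (intro int_prod L2_meas L2_sq X) auto
  then show ?thesis by simp
qed

lemma L2_comp:
  assumes "L2_vec M X" shows "L2_vec M (\<lambda>w. (W::real^'n^'m) *v X w)"
  unfolding L2_vec_def
proof (intro conjI allI)
  have "continuous_on UNIV (\<lambda>x::real^'n. W *v x)"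
    by (intro linear_continuous_on matrix_vector_mul_bounded_linear)
  then show "(\<lambda>w. W *v X w) \<in> borel_measurable M"
    by (rule borel_measurable_continuous_on) (use assms in \<open>simp add: L2_vec_def\<close>)
  fix i
  have e: "((W *v X w) $ i)\<^sup>2 = (\<Sum>k\<in>UNIV. \<Sum>l\<in>UNIV. (W$i$k * W$i$l) * (X w $ k * X w $ l))" for w
  proof -
    have "((W *v X w) $ i)\<^sup>2 = (\<Sum>k\<in>UNIV. W$i$k * X w $ k) * (\<Sum>l\<in>UNIV. W$i$l * X w $ l)"
      by (simp add: matrix_vector_mult_def power2_eq_square)
    also have "\<dots> = (\<Sum>k\<in>UNIV. \<Sum>l\<in>UNIV. (W$i$k * X w $ k) * (W$i$l * X w $ l))"
      by (rule sum_product)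
    also have "\<dots> = (\<Sum>k\<in>UNIV. \<Sum>l\<in>UNIV. (W$i$k * W$i$l) * (X w $ k * X w $ l))"
      by (intro sum.cong refl) (simp only: mult_ac)
    finally show ?thesis .
  qed
  have "integrable M (\<lambda>w. \<Sum>k\<in>UNIV. \<Sum>l\<in>UNIV. (W$i$k * W$i$l) * (X w $ k * X w $ l))"
    apply (rule Bochner_Integration.integrable_sum)+
    apply (rule Bochner_Integration.integrable_mult_right)
    apply (rule L2_int_prod[OF assms assms])
    done
  then show "integrable M (\<lambda>w. ((W *v X w) $ i)\<^sup>2)" by (simp only: e)
qed

lemma L2_add:
  assumes "L2_vec M X" "L2_vec M Y" shows "L2_vec M (\<lambda>w. X w + Y w :: real^'n)"
  unfolding L2_vec_def
proof (intro conjI allI)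
  show "(\<lambda>w. X w + Y w) \<in> borel_measurable M" using assms unfolding L2_vec_def by (intro borel_measurable_add) auto
  fix i
  have "(\<lambda>w. ((X w + Y w) $ i)\<^sup>2) = (\<lambda>w. (X w $ i)\<^sup>2 + 2 * (X w $ i * Y w $ i) + (Y w $ i)\<^sup>2)"
    by (simp add: power2_eq_square algebra_simps)
  moreover have "integrable M (\<lambda>w. (X w $ i)\<^sup>2 + 2 * (X w $ i * Y w $ i) + (Y w $ i)\<^sup>2)"
    apply (rule Bochner_Integration.integrable_add)+
      apply (rule L2_sq[OF assms(1)])
     apply (rule Bochner_Integration.integrable_mult_right)
     apply (rule L2_int_prod[OF assms])
    apply (rule L2_sq[OF assms(2)])
    done
  ultimately show "integrable M (\<lambda>w. ((X w + Y w) $ i)\<^sup>2)" by simp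
qed

definition cross :: "'a measure \<Rightarrow> ('a \<Rightarrow> real^'m) \<Rightarrow> ('a \<Rightarrow> real^'n) \<Rightarrow> real^'n^'m" where
  "cross M a b = (\<chi> i j. integral\<^sup>L M (\<lambda>w. a w $ i * b w $ j))"

lemma cross_transpose: "transpose (cross M a b) = cross M b a"
  by (simp add: cross_def transpose_def vec_eq_iff mult.commute)

lemma cross_left_mat:
  assumes "L2_vec M a" "L2_vec M b"
  shows "cross M (\<lambda>w. (W::real^'m^'k) *v a w) b = W ** cross M a b"
proof -
  have "integral\<^sup>L M (\<lambda>w. (W *v a w) $ i * b w $ j) = (\<Sum>k\<in>UNIV. W$i$k * integral\<^sup>L M (\<lambda>w. a w $ k * b w $ j))" for i j
  proof -
    have "integral\<^sup>L M (\<lambda>w. (W *v a w) $ i * b w $ j) = integral\<^sup>L M (\<lambda>w. \<Sum>k\<in>UNIV. W$i$k * (a w $ k * b w $ j))"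
      by (simp add: matrix_vector_mult_def sum_distrib_right mult.assoc)
    also have "\<dots> = (\<Sum>k\<in>UNIV. W$i$k * integral\<^sup>L M (\<lambda>w. a w $ k * b w $ j))"
      by (simp add: Bochner_Integration.integral_sum L2_int_prod assms)
    finally show ?thesis .
  qed
  then show ?thesis by (simp add: cross_def matrix_matrix_mult_def vec_eq_iff)
qed

lemma cross_right_mat:
  assumes "L2_vec M a" "L2_vec M b"
  shows "cross M a (\<lambda>w. (W::real^'m^'k) *v b w) = cross M a b ** transpose W"
proof -
  have "cross M a (\<lambda>w. W *v b w) = transpose (cross M (\<lambda>w. W *v b w) a)"
    by (simp add: cross_transpose)
  also have "\<dots> = transpose (W ** cross M b a)" by (simp add: cross_left_mat assms)
  also have "\<dots> = cross M a b ** transpose W" by (simp add: matrix_transpose_mul cross_transpose)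
  finally show ?thesis .
qed

lemma cross_add_left:
  assumes "L2_vec M a" "L2_vec M a'" "L2_vec M b"
  shows "cross M (\<lambda>w. a w + a' w) b = cross M a b + cross M a' b"
  using assms by (simp add: cross_def vec_eq_iff distrib_right L2_int_prod)

lemma cross_add_right:
  assumes "L2_vec M a" "L2_vec M b" "L2_vec M b'"
  shows "cross M a (\<lambda>w. b w + b' w) = cross M a b + cross M a b'"
  using assms by (simp add: cross_def vec_eq_iff distrib_left L2_int_prod)

lemma AE_zero:
  assumes b: "L2_vec M b" and D: "(D::real^'n^'m) ** cross M b b = 0"
  shows "AE w in M. D *v b w = 0"
proof -
  define d where "d = (\<lambda>w. D *v b w)"
  have Ld: "L2_vec M d" unfolding d_def by (rule L2_comp[OF b])
  have "cross M d d = D ** cross M b b ** transpose D"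
    unfolding d_def by (simp add: cross_left_mat cross_right_mat L2_comp b matrix_mul_assoc)
  then have cdd: "cross M d d = 0" using D by simp
  have "AE w in M. d w $ i * d w $ i = 0" for i
  proof -
    have "integral\<^sup>L M (\<lambda>w. d w $ i * d w $ i) = 0"
      using cdd by (simp add: cross_def vec_eq_iff)
    moreover have "integrable M (\<lambda>w. d w $ i * d w $ i)" by (intro L2_int_prod Ld)
    ultimately show ?thesis
      by (subst (asm) integral_nonneg_eq_0_iff_AE) auto
  qed
  then have "AE w in M. \<forall>i\<in>UNIV. d w $ i * d w $ i = 0"
    by (intro AE_finite_allI) auto
  then show ?thesis
    by eventually_elim (simp add: d_def vec_eq_iff)
qed

lemma cross_pinv:
  assumes a: "L2_vec M a" and b: "L2_vec M b" and H: "cross M b b ** H ** cross M b b = cross M b b"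
  shows "cross M a b ** H ** cross M b b = cross M a b"
proof -
  define G where "G = cross M b b"
  have Gs: "transpose G = G" unfolding G_def by (rule cross_transpose)
  have H': "G ** transpose H ** G = G"
  proof -
    have "transpose (G ** H ** G) = G ** transpose H ** G"
      by (simp add: matrix_transpose_mul Gs matrix_mul_assoc)
    then show ?thesis using H Gs unfolding G_def by simp
  qed
  define D where "D = mat 1 - G ** transpose H"
  have "D ** G = 0" by (simp add: D_def mm_diff_r H')
  then have AE: "AE w in M. D *v b w = 0" using AE_zero[OF b, of D] unfolding G_def by simp
  have "cross M a (\<lambda>w. D *v b w) = 0"
  proof -
    have "integral\<^sup>L M (\<lambda>w. a w $ i * (D *v b w) $ j) = 0" for i j
      by (rule integral_eq_zero_AE) (use AE in \<open>auto elim!: eventually_mono\<close>)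
    then show ?thesis by (simp add: cross_def vec_eq_iff)
  qed
  moreover have "cross M a (\<lambda>w. D *v b w) = cross M a b - cross M a b ** H ** G"
  proof -
    have tD: "transpose D = mat 1 - H ** G"
      by (simp add: D_def transpose_diff transpose_mat1 matrix_transpose_mul Gs)
    have "cross M a (\<lambda>w. D *v b w) = cross M a b ** (mat 1 - H ** G)"
      by (simp add: cross_right_mat a b tD)
    also have "\<dots> = cross M a b - cross M a b ** H ** G"
      by (simp add: mm_diff_l matrix_mul_assoc)
    finally show ?thesis .
  qed
  ultimately show ?thesis unfolding G_def by simp
qed

lemma oP_char:
  assumes a: "L2_vec M a" and b: "L2_vec M b"
    and W: "(W::real^'n^'m) ** cross M b b = cross M a b"
  shows "AE w in M. oP M a b w = W *v b w"
proof -
  have ameas: "(\<lambda>w. a w $ i) \<in> borel_measurable M" for i by (rule L2_meas[OF a])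
  have Lc: "L2_vec M (\<lambda>w. W *v b w)" by (rule L2_comp[OF b])
  have orth: "integral\<^sup>L M (\<lambda>w. (a w $ i - (V *v b w) $ i) * b w $ j)
      = (cross M a b - V ** cross M b b) $ i $ j" for V :: "real^'n^'m" and i j
  proof -
    have "integral\<^sup>L M (\<lambda>w. (a w $ i - (V *v b w) $ i) * b w $ j)
        = integral\<^sup>L M (\<lambda>w. a w $ i * b w $ j) - integral\<^sup>L M (\<lambda>w. (V *v b w) $ i * b w $ j)"
      by (simp add: left_diff_distrib L2_int_prod a b L2_comp)
    also have "\<dots> = (cross M a b - cross M (\<lambda>w. V *v b w) b) $ i $ j"
      by (simp add: cross_def)
    also have "\<dots> = (cross M a b - V ** cross M b b) $ i $ j"
      by (simp add: cross_left_mat b)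
    finally show ?thesis .
  qed
  have "is_oP M a b (\<lambda>w. W *v b w)"
    unfolding is_oP_def
  proof (intro conjI allI exI)
    show "(\<lambda>w. W *v b w) \<in> borel_measurable M" using Lc unfolding L2_vec_def by simp
    show "AE w in M. W *v b w = W *v b w" by simp
    fix i j show "integral\<^sup>L M (\<lambda>w. (a w $ i - (W *v b w) $ i) * b w $ j) = 0"
      by (simp add: orth W)
  qed
  then have "is_oP M a b (oP M a b)" unfolding oP_def by (rule someI[of "is_oP M a b"])
  then obtain W' :: "real^'n^'m" where mo: "oP M a b \<in> borel_measurable M"
      and AEW': "AE w in M. oP M a b w = W' *v b w"
      and orth': "\<And>i j. integral\<^sup>L M (\<lambda>w. (a w $ i - oP M a b w $ i) * b w $ j) = 0"
    unfolding is_oP_def by blast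
  have "W' ** cross M b b = cross M a b"
  proof -
    have "(cross M a b - W' ** cross M b b) $ i $ j = 0" for i j
    proof -
      have "(cross M a b - W' ** cross M b b) $ i $ j
          = integral\<^sup>L M (\<lambda>w. (a w $ i - (W' *v b w) $ i) * b w $ j)" by (simp add: orth)
      also have "\<dots> = integral\<^sup>L M (\<lambda>w. (a w $ i - oP M a b w $ i) * b w $ j)"
      proof (rule integral_cong_AE)
        show "(\<lambda>w. (a w $ i - (W' *v b w) $ i) * b w $ j) \<in> borel_measurable M"
          using L2_comp[OF b, of W'] ameas L2_meas[OF b] L2_meas[OF L2_comp[OF b, of W']]
          by (intro borel_measurable_times borel_measurable_diff) auto
        have "(\<lambda>w. oP M a b w $ i) \<in> borel_measurable M"
          by (rule measurable_compose[OF mo]) simp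
        then show "(\<lambda>w. (a w $ i - oP M a b w $ i) * b w $ j) \<in> borel_measurable M"
          using ameas L2_meas[OF b] by (intro borel_measurable_times borel_measurable_diff) auto
        show "AE w in M. (a w $ i - (W' *v b w) $ i) * b w $ j = (a w $ i - oP M a b w $ i) * b w $ j"
          using AEW' by eventually_elim simp
      qed
      also have "\<dots> = 0" by (rule orth')
      finally show ?thesis .
    qed
    then show ?thesis by (simp add: vec_eq_iff)
  qed
  then have "(W' - W) ** cross M b b = 0" using W by (simp add: mm_diff_r)
  then have "AE w in M. (W' - W) *v b w = 0" by (rule AE_zero[OF b])
  with AEW' show ?thesis
    by eventually_elim (simp add: matrix_vector_mult_diff_rdistrib)
qed

lemma Int_stable_vimage: "Int_stable {f -` S \<inter> A | S. S \<in> sets N}"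
proof (rule Int_stableI)
  fix a b assume "a \<in> {f -` S \<inter> A | S. S \<in> sets N}" "b \<in> {f -` S \<inter> A | S. S \<in> sets N}"
  then obtain S S' where "S \<in> sets N" "S' \<in> sets N" "a = f -` S \<inter> A" "b = f -` S' \<inter> A" by blast
  then show "a \<inter> b \<in> {f -` S \<inter> A | S. S \<in> sets N}" by (intro CollectI exI[of _ "S \<inter> S'"]) auto
qed

lemma indep_cross:
  fixes X :: "'a \<Rightarrow> real^'n" and eps :: "'a \<Rightarrow> real^'m"
  assumes pM: "prob_space M"
    and X: "L2_vec M X" and cX: "centered M X"
    and E: "L2_vec M eps" and cE: "centered M eps"
    and indep: "\<forall>S \<in> sets borel. \<forall>T \<in> sets borel.
       measure M (X -` S \<inter> eps -` T \<inter> space M)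
         = measure M (X -` S \<inter> space M) * measure M (eps -` T \<inter> space M)"
  shows "cross M X eps = 0"
proof -
  interpret prob_space M by fact
  have Xm: "X \<in> borel_measurable M" and Em: "eps \<in> borel_measurable M"
    using X E unfolding L2_vec_def by auto
  have "integral\<^sup>L M (\<lambda>w. X w $ i * eps w $ j) = 0" for i j
  proof -
    define Xi where "Xi = (\<lambda>w. X w $ i)"
    define Ej where "Ej = (\<lambda>w. eps w $ j)"
    have Xim: "Xi \<in> borel_measurable M" unfolding Xi_def by (rule L2_meas[OF X])
    have Ejm: "Ej \<in> borel_measurable M" unfolding Ej_def by (rule L2_meas[OF E])
    define GA where "GA = {Xi -` S \<inter> space M | S. S \<in> sets (borel :: real measure)}"
    define GB where "GB = {Ej -` S \<inter> space M | S. S \<in> sets (borel :: real measure)}"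
    have ci: "(\<lambda>x::real^'n. x $ i) \<in> borel_measurable borel" by measurable
    have cj: "(\<lambda>x::real^'m. x $ j) \<in> borel_measurable borel" by measurable
    have "indep_set GA GB"
      unfolding indep_sets2_eq
    proof (intro conjI ballI)
      show "GA \<subseteq> events" unfolding GA_def using Xim by (auto intro: measurable_sets)
      show "GB \<subseteq> events" unfolding GB_def using Ejm by (auto intro: measurable_sets)
      fix a b assume "a \<in> GA" "b \<in> GB"
      then obtain S T where S: "S \<in> sets borel" "a = Xi -` S \<inter> space M"
        and T: "T \<in> sets borel" "b = Ej -` T \<inter> space M"
        unfolding GA_def GB_def by blast
      define S' where "S' = (\<lambda>x::real^'n. x $ i) -` S"
      define T' where "T' = (\<lambda>x::real^'m. x $ j) -` T"
      have S': "S' \<in> sets borel" using measurable_sets[OF ci S(1)] unfolding S'_def by simp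
      have T': "T' \<in> sets borel" using measurable_sets[OF cj T(1)] unfolding T'_def by simp
      have a: "a = X -` S' \<inter> space M" using S unfolding S'_def Xi_def by auto
      have b: "b = eps -` T' \<inter> space M" using T unfolding T'_def Ej_def by auto
      have "a \<inter> b = X -` S' \<inter> eps -` T' \<inter> space M" using a b by auto
      then show "prob (a \<inter> b) = prob a * prob b" using indep S' T' a b by simp
    qed
    moreover have "Int_stable GA"
      unfolding GA_def by (rule Int_stable_vimage)
    moreover have "Int_stable GB"
      unfolding GB_def by (rule Int_stable_vimage)
    ultimately have "indep_set (sigma_sets (space M) GA) (sigma_sets (space M) GB)"
      by (rule indep_set_sigma_sets)
    then have iv: "indep_var borel Xi borel Ej"
      unfolding indep_var_eq GA_def GB_def using Xim Ejm by auto
    have "integral\<^sup>L M (\<lambda>w. Xi w * Ej w) = integral\<^sup>L M Xi * integral\<^sup>L M Ej"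
      by (rule indep_var_lebesgue_integral[OF iv]) (unfold Xi_def Ej_def, (rule L2_int[OF pM X] L2_int[OF pM E])+)
    then show ?thesis using cX unfolding centered_def Xi_def Ej_def by simp
  qed
  then show ?thesis by (simp add: cross_def vec_eq_iff)
qed


theorem mainTheorem4:
  fixes M :: "'a measure"
    and X :: "'a \<Rightarrow> real^'p" and eps :: "'a \<Rightarrow> real^'q" and Z :: "real^'p^'q"
  assumes "prob_space M"
    and "L2_vec M X" and "centered M X"
    and "L2_vec M eps" and "centered M eps"
    and indep: "\<forall>S \<in> sets borel. \<forall>T \<in> sets borel.
       measure M (X -` S \<inter> eps -` T \<inter> space M)
         = measure M (X -` S \<inter> space M) * measure M (eps -` T \<inter> space M)"
  defines "Y \<equiv> (\<lambda>\<omega>. Z *v X \<omega> + eps \<omega>)"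
    and "\<Sigma> \<equiv> cov_mat M X" and "V \<equiv> cov_mat M eps"
  defines "B \<equiv> Z ** \<Sigma> ** transpose Z"
  defines "C \<equiv> B + V"
  defines "K \<equiv> \<Sigma> ** transpose Z ** mp_inverse C"
    and "Z\<^sub>\<Sigma> \<equiv> \<Sigma> ** transpose Z ** mp_inverse B"
  shows "(AE \<omega> in M. oP M eps Y \<omega> = (mat 1 - Z ** K) *v Y \<omega>)
    \<and> (AE \<omega> in M. oP M X Y \<omega> = K *v Y \<omega>)
    \<and> (AE \<omega> in M. oP M X Y \<omega> = Z\<^sub>\<Sigma> *v (Y \<omega> - oP M eps Y \<omega>))"
  proof -
  have pM: "prob_space M" and LX: "L2_vec M X" and cX: "centered M X"
    and LE: "L2_vec M eps" and cE: "centered M eps" using assms(1-5) .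
  have LZX: "L2_vec M (\<lambda>\<omega>. Z *v X \<omega>)" by (rule L2_comp[OF LX])
  have LY: "L2_vec M Y" unfolding Y_def by (intro L2_add L2_comp LX LE)
  have XE: "cross M X eps = 0" by (rule indep_cross[OF pM LX cX LE cE indep])
  have EX: "cross M eps X = 0"
  proof -
    have "cross M eps X = transpose (cross M X eps)" by (simp add: cross_transpose)
    then show ?thesis using XE by (simp add: transpose_def vec_eq_iff)
  qed
  have Sig: "\<Sigma> = cross M X X" by (simp add: \<Sigma>_def cov_mat_def cross_def)
  have Vd: "V = cross M eps eps" by (simp add: V_def cov_mat_def cross_def)
  have XZX: "cross M X (\<lambda>\<omega>. Z *v X \<omega>) = \<Sigma> ** transpose Z"
    by (simp add: cross_right_mat LX Sig)
  have XY: "cross M X Y = \<Sigma> ** transpose Z"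
    unfolding Y_def by (simp add: cross_add_right LX LZX LE XZX XE)
  have EY: "cross M eps Y = V"
    unfolding Y_def by (simp add: cross_add_right LE LZX cross_right_mat LX EX Vd)
  have YY: "cross M Y Y = C"
  proof -
    have "cross M Y Y = cross M (\<lambda>\<omega>. Z *v X \<omega>) Y + cross M eps Y"
      unfolding Y_def by (rule cross_add_left[OF LZX LE]) (use LY in \<open>simp add: Y_def\<close>)
    also have "\<dots> = Z ** (\<Sigma> ** transpose Z) + V" by (simp add: cross_left_mat LX LY XY EY)
    finally show ?thesis by (simp add: C_def B_def matrix_mul_assoc)
  qed
  have BB': "cross M (\<lambda>\<omega>. Z *v X \<omega>) (\<lambda>\<omega>. Z *v X \<omega>) = B"
    by (simp add: cross_left_mat LX LZX XZX B_def matrix_mul_assoc)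
  have Cs: "transpose C = C" using cross_transpose[of M Y Y] YY by simp
  have Bs: "transpose B = B" using cross_transpose[of M "\<lambda>\<omega>. Z *v X \<omega>" "\<lambda>\<omega>. Z *v X \<omega>"] BB' by simp
  have pC: "penrose C (mp_inverse C)" unfolding mp_inverse_def by (rule mp_inverse_sym[OF Cs])
  have pB: "penrose B (mp_inverse B)" unfolding mp_inverse_def by (rule mp_inverse_sym[OF Bs])
  have KC: "K ** C = \<Sigma> ** transpose Z"
  proof -
    have "cross M X Y ** mp_inverse C ** cross M Y Y = cross M X Y"
      by (rule cross_pinv[OF LX LY]) (use pC YY in \<open>simp add: penrose_def\<close>)
    then show ?thesis by (simp add: K_def XY YY)
  qed
  have BB: "\<Sigma> ** transpose Z ** mp_inverse B ** B = \<Sigma> ** transpose Z"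
  proof -
    have "cross M X (\<lambda>\<omega>. Z *v X \<omega>) ** mp_inverse B ** cross M (\<lambda>\<omega>. Z *v X \<omega>) (\<lambda>\<omega>. Z *v X \<omega>)
        = cross M X (\<lambda>\<omega>. Z *v X \<omega>)"
      by (rule cross_pinv[OF LX LZX]) (use pB BB' in \<open>simp add: penrose_def\<close>)
    then show ?thesis by (simp add: XZX BB')
  qed
  have c2: "AE \<omega> in M. oP M X Y \<omega> = K *v Y \<omega>"
    by (rule oP_char[OF LX LY]) (simp add: YY KC XY)
  have c1: "AE \<omega> in M. oP M eps Y \<omega> = (mat 1 - Z ** K) *v Y \<omega>"
  proof (rule oP_char[OF LE LY])
    have "(mat 1 - Z ** K) ** C = mat 1 ** C - (Z ** K) ** C" by (rule mm_diff_r)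
    also have "\<dots> = C - Z ** (K ** C)" by (simp only: matrix_mul_lid matrix_mul_assoc)
    also have "\<dots> = C - Z ** (\<Sigma> ** transpose Z)" by (simp only: KC)
    also have "\<dots> = V" by (simp add: C_def B_def matrix_mul_assoc)
    finally show "(mat 1 - Z ** K) ** cross M Y Y = cross M eps Y" by (simp add: YY EY)
  qed
  have ZK: "Z\<^sub>\<Sigma> ** (Z ** K) = K"
  proof -
    have "Z\<^sub>\<Sigma> ** (Z ** K) = (\<Sigma> ** transpose Z ** mp_inverse B ** B) ** mp_inverse C"
      unfolding assms(13) K_def B_def by (simp only: matrix_mul_assoc)
    also have "\<dots> = K" by (simp add: BB K_def)
    finally show ?thesis .
  qed
  have c3: "AE \<omega> in M. oP M X Y \<omega> = Z\<^sub>\<Sigma> *v (Y \<omega> - oP M eps Y \<omega>)"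
    using c1 c2
  proof eventually_elim
    case (elim \<omega>)
    have "Z\<^sub>\<Sigma> *v (Y \<omega> - oP M eps Y \<omega>) = Z\<^sub>\<Sigma> *v ((Z ** K) *v Y \<omega>)"
      using elim(1) by (simp add: matrix_vector_mult_diff_rdistrib)
    also have "\<dots> = K *v Y \<omega>" by (simp add: matrix_vector_mul_assoc ZK)
    finally show ?case using elim(2) by simp
  qed
  show ?thesis using c1 c2 c3 by blast
qed

end
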